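(* Suppose assumption (C) below holds. Fix $k\ge3$ and let $\mathcal U_k$ be the set from (C); for a scalar $T$ (tensor of order $0$) define $\|T\|_{\mathcal U_k}=|T|$. Then for any $\varepsilon>0$ there exists $C\equiv C(\varepsilon,k)>0$ such that for all $i\in[N]$, all $0\le m\le k$, all $\mathbf s_1,\dots,\mathbf s_m\in\mathbb C^n$ and all $T\in(\mathbb C^n)^{\otimes k-m}$, \[|\langle\kappa_k(\mathbf g_i),\mathbf s_1\otimes\cdots\otimes\mathbf s_m\otimes T\rangle|\le Cn^{\varepsilon}(\sqrt n)^{k-m}\|T\|_{\mathcal U_k}\prod_{t=1}^m\|\mathbf s_t\|_2.\]
   Context: $\mathbf g_1,\dots,\mathbf g_N\in\mathbb R^n$ are random vectors with finite moments (indexed by $N$, $n=n(N)$). $\langle\cdot,\cdot\rangle$ denotes the non-conjugate (bilinear) scalar product on $(\mathbb C^n)^{\otimes k}$. $\kappa_k(\mathbf g_i)\in(\mathbb R^n)^{\otimes k}$ is the $k$-th cumulant tensor, with entries the mixed cumulants $\kappa_k(\mathbf e_{\alpha_1}^*\mathbf g_i,\dots,\mathbf e_{\alpha_k}^*\mathbf g_i)$. For $\mathcal U\subseteq\mathbb R^n$ and $T$ of order $k\ge1$, $\|T\|_{\mathcal U}=\sup_{\mathbf x_1,\dots,\mathbf x_k\in\mathcal U}|\langle\mathbf x_1\otimes\cdots\otimes\mathbf x_k,T\rangle|$. (C): for each $k\ge3$ there exist $C_k>0$ and a deterministic $\mathcal U_k\subset\mathbb R^n$ with $\{\mathbf e_1,\dots,\mathbf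 e_n\}\subseteq\mathcal U_k$, $|\mathcal U_k|\le n^{C_k}$, $\|\mathbf x\|_2\le C_k$ for all $\mathbf x\in\mathcal U_k$, such that for any $\varepsilon>0$ there is $C(\varepsilon,k)$ with, for each $i$, $m\in\{1,\dots,k-1\}$, $\mathbf s_1,\dots,\mathbf s_m\in\mathbb R^n$, $T\in(\mathbb R^n)^{\otimes k-m}$: $|\langle\kappa_k(\mathbf g_i),\mathbf s_1\otimes\cdots\otimes\mathbf s_m\otimes T\rangle|\le Cn^\varepsilon(\sqrt n)^{k-m-1}\|T\|_{\mathcal U_k}\prod_t\|\mathbf s_t\|_2$. *)

theory Defs
  imports "HOL-Probability.Probability" "HOL-Library.Disjoint_Sets"
begin

(* Vectors in K^n are represented as functions nat => K, only coordinates j < n matter.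
   Tensors of order r in (K^n)^{\<otimes> r} are functions on index lists alpha of length r
   with entries < n. *)

definition idx :: "nat \<Rightarrow> nat \<Rightarrow> nat list set" where
  "idx n r = {\<alpha>. length \<alpha> = r \<and> set \<alpha> \<subseteq> {..<n}}"

(* non-conjugate bilinear scalar product on (K^n)^{\<otimes> r} *)
definition tpair :: "nat \<Rightarrow> nat \<Rightarrow> (nat list \<Rightarrow> 'a::comm_semiring_1) \<Rightarrow> (nat list \<Rightarrow> 'a) \<Rightarrow> 'a" where
  "tpair n r A B = (\<Sum>\<alpha>\<in>idx n r. A \<alpha> * B \<alpha>)"

definition tprod :: "nat \<Rightarrow> (nat \<Rightarrow> nat \<Rightarrow> 'a::comm_semiring_1) \<Rightarrow> (nat list \<Rightarrow> 'a) \<Rightarrow> nat list \<Rightarrow> 'a" where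
  "tprod m s T = (\<lambda>\<alpha>. (\<Prod>t<m. s t (\<alpha> ! t)) * T (drop m \<alpha>))"

definition vprod :: "nat \<Rightarrow> (nat \<Rightarrow> nat \<Rightarrow> 'a::comm_semiring_1) \<Rightarrow> nat list \<Rightarrow> 'a" where
  "vprod r x = (\<lambda>\<alpha>. \<Prod>j<r. x j (\<alpha> ! j))"

definition vnorm2 :: "nat \<Rightarrow> (nat \<Rightarrow> 'a::real_normed_vector) \<Rightarrow> real" where
  "vnorm2 n s = sqrt (\<Sum>j<n. (norm (s j))^2)"

definition unorm :: "nat \<Rightarrow> (nat \<Rightarrow> real) set \<Rightarrow> nat \<Rightarrow> (nat list \<Rightarrow> 'a::{real_normed_algebra_1,comm_ring_1}) \<Rightarrow> real" where
  "unorm n U r T = Sup {norm (tpair n r (vprod r (\<lambda>j l. of_real (x j l))) T) | x. \<forall>j<r. x j \<in> U}"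

definition evec :: "nat \<Rightarrow> nat \<Rightarrow> real" where
  "evec j = (\<lambda>l. if l = j then 1 else 0)"

definition mixed_cumulant :: "'w measure \<Rightarrow> nat \<Rightarrow> (nat \<Rightarrow> 'w \<Rightarrow> real) \<Rightarrow> real" where
  "mixed_cumulant M k X =
     (\<Sum>P\<in>{P. partition_on {..<k} P}.
        (-1) ^ (card P - 1) * fact (card P - 1) * (\<Prod>B\<in>P. integral\<^sup>L M (\<lambda>\<omega>. \<Prod>j\<in>B. X j \<omega>)))"

definition cumulant_tensor :: "'w measure \<Rightarrow> nat \<Rightarrow> ('w \<Rightarrow> nat \<Rightarrow> real) \<Rightarrow> nat list \<Rightarrow> real" where
  "cumulant_tensor M k g = (\<lambda>\<alpha>. mixed_cumulant M k (\<lambda>j \<omega>. g \<omega> (\<alpha> ! j)))"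

definition random_vectors_setting ::
  "(nat \<Rightarrow> 'w measure) \<Rightarrow> (nat \<Rightarrow> nat) \<Rightarrow> (nat \<Rightarrow> nat \<Rightarrow> 'w \<Rightarrow> nat \<Rightarrow> real) \<Rightarrow> bool" where
  "random_vectors_setting M n g \<longleftrightarrow>
     (\<forall>N. prob_space (M N) \<and>
        (\<forall>i\<in>{1..N}. \<forall>\<alpha><n N.
           (\<lambda>\<omega>. g N i \<omega> \<alpha>) \<in> borel_measurable (M N) \<and>
           (\<forall>p::nat. integrable (M N) (\<lambda>\<omega>. \<bar>g N i \<omega> \<alpha>\<bar> ^ p))))"

(* Assumption (C) for a fixed k, with witnesses Ck and U (U N is the set U_k for dimension n N). *)
definition C_witness ::
  "(nat \<Rightarrow> 'w measure) \<Rightarrow> (nat \<Rightarrow> nat) \<Rightarrow> (nat \<Rightarrow> nat \<Rightarrow> 'w \<Rightarrow> nat \<Rightarrow> real)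
    \<Rightarrow> nat \<Rightarrow> real \<Rightarrow> (nat \<Rightarrow> (nat \<Rightarrow> real) set) \<Rightarrow> bool" where
  "C_witness M n g k Ck U \<longleftrightarrow>
     Ck > 0 \<and>
     (\<forall>N. finite (U N) \<and> U N \<subseteq> {x. \<forall>l\<ge>n N. x l = 0} \<and>
          evec ` {..<n N} \<subseteq> U N \<and>
          real (card (U N)) \<le> real (n N) powr Ck \<and>
          (\<forall>x\<in>U N. vnorm2 (n N) x \<le> Ck)) \<and>
     (\<forall>\<epsilon>>0. \<exists>C. \<forall>N. \<forall>i\<in>{1..N}. \<forall>m\<in>{1..k-1}.
        \<forall>(s::nat \<Rightarrow> nat \<Rightarrow> real) (T::nat list \<Rightarrow> real).
          \<bar>tpair (n N) k (cumulant_tensor (M N) k (g N i)) (tprod m s T)\<bar>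
            \<le> C * real (n N) powr \<epsilon> * sqrt (real (n N)) ^ (k - m - 1)
                * unorm (n N) (U N) (k - m) T * (\<Prod>t<m. vnorm2 (n N) (s t)))"

definition assumption_C ::
  "(nat \<Rightarrow> 'w measure) \<Rightarrow> (nat \<Rightarrow> nat) \<Rightarrow> (nat \<Rightarrow> nat \<Rightarrow> 'w \<Rightarrow> nat \<Rightarrow> real) \<Rightarrow> bool" where
  "assumption_C M n g \<longleftrightarrow> (\<forall>k\<ge>3. \<exists>Ck U. C_witness M n g k Ck U)"

end

theory Submission imports Defs begin

lemma finite_idx: "finite (idx n r)"
proof -
  have "idx n r = {xs. set xs \<subseteq> {..<n} \<and> length xs = r}" unfolding idx_def by auto
  thus ?thesis using finite_lists_length_eq[of "{..<n}" r] by simp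
qed

lemma idx_0: "idx n 0 = {[]}" unfolding idx_def by auto

lemma idx_Suc: "idx n (Suc r) = (\<lambda>(a,\<beta>). a#\<beta>) ` ({..<n} \<times> idx n r)"
proof (rule set_eqI)
  fix xs show "xs \<in> idx n (Suc r) \<longleftrightarrow> xs \<in> (\<lambda>(a,\<beta>). a#\<beta>) ` ({..<n} \<times> idx n r)"
    unfolding idx_def by (cases xs) (auto simp: image_iff)
qed

lemma idx_Suc_sum: "(\<Sum>\<alpha>\<in>idx n (Suc r). f \<alpha>) = (\<Sum>a<n. \<Sum>\<beta>\<in>idx n r. f (a#\<beta>))"
proof -
  have inj: "inj_on (\<lambda>(a,\<beta>). a#\<beta>) ({..<n} \<times> idx n r)" by (auto simp: inj_on_def)
  have "(\<Sum>\<alpha>\<in>idx n (Suc r). f \<alpha>) = (\<Sum>p\<in>{..<n} \<times> idx n r. f ((\<lambda>(a,\<beta>). a#\<beta>) p))"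
    unfolding idx_Suc by (subst sum.reindex[OF inj]) simp
  also have "\<dots> = (\<Sum>a<n. \<Sum>\<beta>\<in>idx n r. f (a#\<beta>))"
    unfolding sum.cartesian_product by (intro sum.cong) auto
  finally show ?thesis .
qed

definition uset where
  "uset n U r T = {norm (tpair n r (vprod r (\<lambda>j l. of_real (x j l))) T) | x. \<forall>j<r. x j \<in> U}"

lemma unorm_uset: "unorm n U r T = Sup (uset n U r T)"
  unfolding unorm_def uset_def ..

lemma uset_finite:
  assumes "finite U"
  shows "finite (uset n U r (T :: nat list \<Rightarrow> 'a::{real_normed_algebra_1,comm_ring_1}))"
proof -
  let ?f = "\<lambda>x. norm (tpair n r (vprod r (\<lambda>j l. of_real (x j l))) T) :: real"
  have "uset n U r T \<subseteq> ?f ` (PiE {..<r} (\<lambda>_. U))"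
  proof
    fix y assume "y \<in> uset n U r T"
    then obtain x where x: "\<forall>j<r. x j \<in> U" "y = ?f x" unfolding uset_def by blast
    have "vprod r (\<lambda>j l. (of_real (restrict x {..<r} j l)::'a)) = vprod r (\<lambda>j l. of_real (x j l))"
      unfolding vprod_def by (intro ext prod.cong) auto
    hence "y = ?f (restrict x {..<r})" using x by simp
    moreover have "restrict x {..<r} \<in> PiE {..<r} (\<lambda>_. U)" using x by auto
    ultimately show "y \<in> ?f ` (PiE {..<r} (\<lambda>_. U))" by blast
  qed
  thus ?thesis by (rule finite_subset) (intro finite_imageI finite_PiE assms, simp)
qed

lemma unorm_upper:
  assumes "finite U" "\<forall>j<r. x j \<in> U"
  shows "norm (tpair n r (vprod r (\<lambda>j l. of_real (x j l))) (T :: nat list \<Rightarrow> 'a::{real_normed_algebra_1,comm_ring_1})) \<le> unorm n U r T"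
  unfolding unorm_uset
proof (rule cSup_upper)
  show "bdd_above (uset n U r T)" by (rule bdd_above_finite[OF uset_finite[OF assms(1)]])
  show "norm (tpair n r (vprod r (\<lambda>j l. of_real (x j l))) T) \<in> uset n U r T"
    unfolding uset_def using assms(2) by blast
qed

lemma unorm_least:
  assumes "U \<noteq> {}" "\<And>x. \<forall>j<r. x j \<in> U \<Longrightarrow> norm (tpair n r (vprod r (\<lambda>j l. of_real (x j l))) (T :: nat list \<Rightarrow> 'a::{real_normed_algebra_1,comm_ring_1})) \<le> B"
  shows "unorm n U r T \<le> B"
  unfolding unorm_uset
proof (rule cSup_least)
  obtain u where u: "u \<in> U" using assms(1) by blast
  have "norm (tpair n r (vprod r (\<lambda>j l. of_real ((\<lambda>_. u) j l))) T) \<in> uset n U r T"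
    unfolding uset_def mem_Collect_eq by (intro exI[where x="\<lambda>_. u"]) (simp add: u)
  thus "uset n U r T \<noteq> {}" by blast
  fix y assume "y \<in> uset n U r T"
  then obtain x where x: "\<forall>j<r. x j \<in> U" "y = norm (tpair n r (vprod r (\<lambda>j l. of_real (x j l))) T)"
    unfolding uset_def by blast
  show "y \<le> B" using assms(2)[OF x(1)] x(2) by simp
qed

lemma unorm_nonneg:
  assumes "finite U" "U \<noteq> {}"
  shows "0 \<le> unorm n U r (T :: nat list \<Rightarrow> 'a::{real_normed_algebra_1,comm_ring_1})"
proof -
  obtain u where "u \<in> U" using assms(2) by blast
  hence "norm (tpair n r (vprod r (\<lambda>j l. (of_real ((\<lambda>_. u) j l)::'a))) T) \<le> unorm n U r T"
    by (intro unorm_upper assms) auto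
  thus ?thesis by (meson norm_ge_zero order_trans)
qed


lemma tpair0: "tpair n 0 A B = A [] * B []"
  unfolding tpair_def idx_0 by simp

lemma unorm0:
  assumes "finite U" "U \<noteq> {}"
  shows "unorm n U 0 (T :: nat list \<Rightarrow> 'a::{real_normed_algebra_1,comm_ring_1}) = norm (T [])"
proof (rule antisym)
  show "unorm n U 0 T \<le> norm (T [])"
    by (rule unorm_least[OF assms(2)]) (simp add: tpair0 vprod_def)
  obtain u where u: "u \<in> U" using assms(2) by blast
  have "norm (tpair n 0 (vprod 0 (\<lambda>j l. (of_real ((\<lambda>_. u) j l)::'a))) T) \<le> unorm n U 0 T"
    by (rule unorm_upper[OF assms(1)]) (simp add: u)
  thus "norm (T []) \<le> unorm n U 0 T" by (simp add: tpair0 vprod_def)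
qed

lemma vprod_Suc: "vprod (Suc r) x (a#\<beta>) = x 0 a * vprod r (\<lambda>i. x (Suc i)) \<beta>"
  unfolding vprod_def by (subst prod.lessThan_Suc_shift) simp

lemma sum_evec: "j < n \<Longrightarrow> (\<Sum>a<n. evec j a * f a) = (f j :: real)"
proof -
  assume j: "j < n"
  have "(\<Sum>a<n. evec j a * f a) = (\<Sum>a<n. if a = j then f a else 0)" by (intro sum.cong) (auto simp: evec_def)
  thus ?thesis using j by simp
qed

lemma unorm_slice:
  assumes "finite U" "U \<noteq> {}" "evec ` {..<n} \<subseteq> U" "j < n"
  shows "unorm n U r (\<lambda>\<beta>. (T::nat list \<Rightarrow> real) (j#\<beta>)) \<le> unorm n U (Suc r) T"
proof (rule unorm_least[OF assms(2)])
  fix x :: "nat \<Rightarrow> nat \<Rightarrow> real" assume x: "\<forall>i<r. x i \<in> U"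
  define x' where "x' = (\<lambda>i. if i = 0 then evec j else x (i - 1))"
  have x': "\<forall>i<Suc r. x' i \<in> U" using x assms(3,4) unfolding x'_def by (auto simp: less_Suc_eq_0_disj)
  have "tpair n (Suc r) (vprod (Suc r) x') T = (\<Sum>a<n. \<Sum>\<beta>\<in>idx n r. evec j a * (vprod r x \<beta> * T (a#\<beta>)))"
    unfolding tpair_def idx_Suc_sum vprod_Suc by (simp add: x'_def mult.assoc)
  also have "\<dots> = (\<Sum>a<n. evec j a * (\<Sum>\<beta>\<in>idx n r. vprod r x \<beta> * T (a#\<beta>)))"
    by (simp add: sum_distrib_left)
  also have "\<dots> = tpair n r (vprod r x) (\<lambda>\<beta>. T (j#\<beta>))"
    unfolding tpair_def by (rule sum_evec[OF assms(4)])
  finally have eq: "tpair n (Suc r) (vprod (Suc r) x') T = tpair n r (vprod r x) (\<lambda>\<beta>. T (j#\<beta>))" .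
  have "norm (tpair n (Suc r) (vprod (Suc r) (\<lambda>j l. of_real (x' j l))) T) \<le> unorm n U (Suc r) T"
    by (rule unorm_upper[OF assms(1) x'])
  thus "norm (tpair n r (vprod r (\<lambda>j l. of_real (x j l))) (\<lambda>\<beta>. T (j#\<beta>))) \<le> unorm n U (Suc r) T"
    using eq by simp
qed

lemma vnorm2_evec: "j < n \<Longrightarrow> vnorm2 n (evec j) = 1"
proof -
  assume j: "j < n"
  have "(\<Sum>a<n. (norm (evec j a))^2) = (\<Sum>a<n. if a = j then 1 else 0)" by (intro sum.cong) (auto simp: evec_def)
  thus ?thesis using j unfolding vnorm2_def by simp
qed

lemma vnorm2_nonneg: "0 \<le> vnorm2 n s" unfolding vnorm2_def by (simp add: sum_nonneg)

lemma vnorm2_real: "vnorm2 n (f::nat \<Rightarrow> real) = L2_set f {..<n}"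
  unfolding vnorm2_def L2_set_def by simp

lemma cs_real: "\<bar>\<Sum>a<n. (f a::real) * g a\<bar> \<le> vnorm2 n f * vnorm2 n g"
proof -
  have "\<bar>\<Sum>a<n. f a * g a\<bar> \<le> (\<Sum>a<n. \<bar>f a\<bar> * \<bar>g a\<bar>)"
    by (rule order_trans[OF sum_abs]) (simp add: abs_mult)
  also have "\<dots> \<le> vnorm2 n f * vnorm2 n g" unfolding vnorm2_real by (rule L2_set_mult_ineq)
  finally show ?thesis .
qed


lemma scale_le:
  fixes D D' a b Q :: real
  assumes "0 \<le> Q" "0 \<le> a" "a \<le> b" "\<bar>D\<bar> \<le> D'"
  shows "D * a * Q \<le> D' * b * Q"
proof -
  have "D * a \<le> \<bar>D\<bar> * a" by (rule mult_right_mono) (use assms in auto)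
  also have "\<dots> \<le> D' * b" by (rule mult_mono) (use assms in auto)
  finally show ?thesis by (rule mult_right_mono) (use assms in auto)
qed

lemma vprod_of_real: "vprod r (\<lambda>j l. complex_of_real (x j l)) = (\<lambda>\<alpha>. of_real (vprod r x \<alpha>))"
  unfolding vprod_def by (simp add: of_real_prod)

lemma tpair_Re: "Re (tpair n r (\<lambda>\<alpha>. complex_of_real (A \<alpha>)) T) = tpair n r A (\<lambda>\<alpha>. Re (T \<alpha>))"
  unfolding tpair_def by simp

lemma tpair_Im: "Im (tpair n r (\<lambda>\<alpha>. complex_of_real (A \<alpha>)) T) = tpair n r A (\<lambda>\<alpha>. Im (T \<alpha>))"
  unfolding tpair_def by simp

lemma unorm_Re:
  assumes "finite U" "U \<noteq> {}"
  shows "unorm n U r (\<lambda>\<alpha>. Re (T \<alpha>)) \<le> unorm n U r T"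
proof (rule unorm_least[OF assms(2)])
  fix x :: "nat \<Rightarrow> nat \<Rightarrow> real" assume x: "\<forall>j<r. x j \<in> U"
  have "norm (tpair n r (vprod r (\<lambda>j l. complex_of_real (x j l))) T) \<le> unorm n U r T"
    by (rule unorm_upper[OF assms(1) x])
  moreover have "\<bar>Re (tpair n r (vprod r (\<lambda>j l. complex_of_real (x j l))) T)\<bar> \<le> norm (tpair n r (vprod r (\<lambda>j l. complex_of_real (x j l))) T)"
    by (rule abs_Re_le_cmod)
  ultimately show "norm (tpair n r (vprod r (\<lambda>j l. of_real (x j l))) (\<lambda>\<alpha>. Re (T \<alpha>))) \<le> unorm n U r T"
    unfolding vprod_of_real tpair_Re by simp
qed

lemma unorm_Im:
  assumes "finite U" "U \<noteq> {}"
  shows "unorm n U r (\<lambda>\<alpha>. Im (T \<alpha>)) \<le> unorm n U r T"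
proof (rule unorm_least[OF assms(2)])
  fix x :: "nat \<Rightarrow> nat \<Rightarrow> real" assume x: "\<forall>j<r. x j \<in> U"
  have "norm (tpair n r (vprod r (\<lambda>j l. complex_of_real (x j l))) T) \<le> unorm n U r T"
    by (rule unorm_upper[OF assms(1) x])
  moreover have "\<bar>Im (tpair n r (vprod r (\<lambda>j l. complex_of_real (x j l))) T)\<bar> \<le> norm (tpair n r (vprod r (\<lambda>j l. complex_of_real (x j l))) T)"
    by (rule abs_Im_le_cmod)
  ultimately show "norm (tpair n r (vprod r (\<lambda>j l. of_real (x j l))) (\<lambda>\<alpha>. Im (T \<alpha>))) \<le> unorm n U r T"
    unfolding vprod_of_real tpair_Im by simp
qed

lemma vnorm2_le:
  assumes "\<And>l. \<bar>g l\<bar> \<le> cmod (f l)"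
  shows "vnorm2 n (g :: nat \<Rightarrow> real) \<le> vnorm2 n f"
  unfolding vnorm2_def
proof (rule real_sqrt_le_mono, rule sum_mono)
  fix l show "(norm (g l))^2 \<le> (norm (f l))^2"
    using power_mono[OF assms[of l] abs_ge_zero, of 2] by simp
qed

lemma prod_split:
  assumes "finite A" "B \<subseteq> A"
  shows "(\<Prod>t\<in>B. complex_of_real (a t)) * (\<Prod>t\<in>A-B. \<i> * complex_of_real (b t))
        = \<i> ^ card (A - B) * of_real (\<Prod>t\<in>A. if t \<in> B then a t else b t)"
proof -
  have "(\<Prod>t\<in>A. if t \<in> B then a t else b t) = (\<Prod>t\<in>A-B. if t \<in> B then a t else b t) * (\<Prod>t\<in>B. if t \<in> B then a t else b t)"
    by (rule prod.subset_diff[OF assms(2,1)])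
  also have "\<dots> = (\<Prod>t\<in>A-B. b t) * (\<Prod>t\<in>B. a t)" by (intro arg_cong2[where f="(*)"] prod.cong) auto
  finally have e: "(\<Prod>t\<in>A. if t \<in> B then a t else b t) = (\<Prod>t\<in>A-B. b t) * (\<Prod>t\<in>B. a t)" .
  show ?thesis unfolding e by (simp add: prod.distrib of_real_prod ac_simps)
qed

context
  fixes nn :: nat and U :: "(nat \<Rightarrow> real) set" and \<kappa> :: "nat list \<Rightarrow> real" and k :: nat
    and D e Ck :: real
  assumes nn: "nn \<ge> 1" and k3: "k \<ge> 3" and finU: "finite U" and evU: "evec ` {..<nn} \<subseteq> U"
    and CkU: "\<forall>x\<in>U. vnorm2 nn x \<le> Ck" and Ck: "Ck > 0"
    and H: "\<forall>m\<in>{1..k-1}. \<forall>(s::nat\<Rightarrow>nat\<Rightarrow>real) (T::nat list \<Rightarrow> real).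
              \<bar>tpair nn k \<kappa> (tprod m s T)\<bar> \<le> D * real nn powr e * sqrt (real nn) ^ (k - m - 1)
                 * unorm nn U (k - m) T * (\<Prod>t<m. vnorm2 nn (s t))"
begin

lemma Une: "U \<noteq> {}"
proof -
  have "0 \<in> {..<nn}" using nn by simp
  hence "evec 0 \<in> U" using evU by blast
  thus ?thesis by blast
qed

lemma sq1: "1 \<le> sqrt (real nn)" using nn by simp

lemma real_mid:
  assumes "1 \<le> m" "m \<le> k - 1"
  shows "\<bar>tpair nn k \<kappa> (tprod m s T)\<bar> \<le> (\<bar>D\<bar> * (1 + Ck)) * real nn powr e * sqrt (real nn) ^ (k - m)
                 * unorm nn U (k - m) T * (\<Prod>t<m. vnorm2 nn (s t))"
proof -
  let ?Q = "real nn powr e * unorm nn U (k - m) T * (\<Prod>t<m. vnorm2 nn (s t))"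
  have Q: "0 \<le> ?Q" using unorm_nonneg[OF finU Une, of nn "k-m" T]
    by (intro mult_nonneg_nonneg prod_nonneg) (auto simp: vnorm2_nonneg)
  have "\<bar>tpair nn k \<kappa> (tprod m s T)\<bar> \<le> D * real nn powr e * sqrt (real nn) ^ (k - m - 1)
                 * unorm nn U (k - m) T * (\<Prod>t<m. vnorm2 nn (s t))" using H assms by auto
  also have "\<dots> = D * sqrt (real nn) ^ (k - m - 1) * ?Q" by (simp add: ac_simps)
  also have "\<dots> \<le> (\<bar>D\<bar> * (1 + Ck)) * sqrt (real nn) ^ (k - m) * ?Q"
  proof (rule scale_le[OF Q])
    show "sqrt (real nn) ^ (k - m - 1) \<le> sqrt (real nn) ^ (k - m)"
      by (rule power_increasing) (use sq1 in auto)
    show "\<bar>D\<bar> \<le> \<bar>D\<bar> * (1 + Ck)" using Ck by (simp add: mult_le_cancel_left1)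
  qed simp
  also have "\<dots> = (\<bar>D\<bar> * (1 + Ck)) * real nn powr e * sqrt (real nn) ^ (k - m)
                 * unorm nn U (k - m) T * (\<Prod>t<m. vnorm2 nn (s t))" by (simp add: ac_simps)
  finally show ?thesis .
qed


lemma real_m0:
  "\<bar>tpair nn k \<kappa> (tprod 0 s T)\<bar> \<le> (\<bar>D\<bar> * (1 + Ck)) * real nn powr e * sqrt (real nn) ^ (k - 0)
                 * unorm nn U (k - 0) T * (\<Prod>t<0. vnorm2 nn (s t))"
proof -
  obtain k1 where k1: "k = Suc k1" using k3 by (cases k) auto
  define Tj where "Tj j = (\<lambda>\<beta>. T (j#\<beta>))" for j
  let ?P = "real nn powr e" and ?s = "sqrt (real nn)" and ?u = "unorm nn U k T"
  have each: "tpair nn k \<kappa> (tprod 1 (\<lambda>_. evec j) (Tj j)) = (\<Sum>\<beta>\<in>idx nn k1. \<kappa> (j#\<beta>) * T (j#\<beta>))"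
    if "j < nn" for j
  proof -
    have "tpair nn k \<kappa> (tprod 1 (\<lambda>_. evec j) (Tj j)) = (\<Sum>a<nn. evec j a * (\<Sum>\<beta>\<in>idx nn k1. \<kappa> (a#\<beta>) * T (j#\<beta>)))"
      unfolding tpair_def k1 idx_Suc_sum tprod_def Tj_def by (simp add: sum_distrib_left ac_simps)
    also have "\<dots> = (\<Sum>\<beta>\<in>idx nn k1. \<kappa> (j#\<beta>) * T (j#\<beta>))" by (rule sum_evec[OF that])
    finally show ?thesis .
  qed
  have "tpair nn k \<kappa> (tprod 0 s T) = (\<Sum>j<nn. \<Sum>\<beta>\<in>idx nn k1. \<kappa> (j#\<beta>) * T (j#\<beta>))"
    unfolding tpair_def k1 idx_Suc_sum tprod_def by simp
  also have "\<dots> = (\<Sum>j<nn. tpair nn k \<kappa> (tprod 1 (\<lambda>_. evec j) (Tj j)))"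
    by (rule sum.cong[OF refl], rule each[symmetric]) simp
  finally have dec: "tpair nn k \<kappa> (tprod 0 s T) = (\<Sum>j<nn. tpair nn k \<kappa> (tprod 1 (\<lambda>_. evec j) (Tj j)))" .
  have Q: "0 \<le> ?P * ?s ^ (k - 2)" by simp
  have bj: "\<bar>tpair nn k \<kappa> (tprod 1 (\<lambda>_. evec j) (Tj j))\<bar> \<le> \<bar>D\<bar> * ?u * (?P * ?s ^ (k - 2))"
    if j: "j < nn" for j
  proof -
    have one: "1 \<in> {1..k-1}" using k3 by auto
    have "\<bar>tpair nn k \<kappa> (tprod 1 (\<lambda>_. evec j) (Tj j))\<bar> \<le> D * ?P * ?s ^ (k - 1 - 1)
                 * unorm nn U (k - 1) (Tj j) * vnorm2 nn (evec j)"
      using H[rule_format, OF one, of "\<lambda>_. evec j" "Tj j"] by (simp add: card_lessThan)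
    also have "\<dots> = D * unorm nn U (k - 1) (Tj j) * (?P * ?s ^ (k - 2))"
      using vnorm2_evec[OF j] by (simp add: ac_simps numeral_2_eq_2)
    also have "\<dots> \<le> \<bar>D\<bar> * ?u * (?P * ?s ^ (k - 2))"
    proof (rule scale_le[OF Q])
      show "0 \<le> unorm nn U (k - 1) (Tj j)" by (rule unorm_nonneg[OF finU Une])
      show "unorm nn U (k - 1) (Tj j) \<le> ?u"
        using unorm_slice[OF finU Une evU j, of k1 T] unfolding Tj_def k1 by simp
    qed simp
    finally show ?thesis .
  qed
  have "\<bar>tpair nn k \<kappa> (tprod 0 s T)\<bar> \<le> (\<Sum>j<nn. \<bar>tpair nn k \<kappa> (tprod 1 (\<lambda>_. evec j) (Tj j))\<bar>)"
    unfolding dec by (rule sum_abs)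
  also have "\<dots> \<le> (\<Sum>j<nn. \<bar>D\<bar> * ?u * (?P * ?s ^ (k - 2)))" by (rule sum_mono, rule bj) simp
  also have "\<dots> = \<bar>D\<bar> * ?s ^ k * (?P * ?u)"
  proof -
    have kk: "k = (k - 2) + 2" using k3 by simp
    have "?s ^ k = ?s ^ (k - 2) * ?s ^ 2" by (metis kk power_add)
    thus ?thesis by (simp add: ac_simps)
  qed
  also have "\<dots> \<le> (\<bar>D\<bar> * (1 + Ck)) * ?s ^ k * (?P * ?u)"
    by (rule scale_le) (use Ck unorm_nonneg[OF finU Une, of nn k T] in \<open>auto simp: mult_le_cancel_left1\<close>)
  finally show ?thesis by (simp add: ac_simps)
qed

lemma real_mk:
  "\<bar>tpair nn k \<kappa> (tprod k s T)\<bar> \<le> (\<bar>D\<bar> * (1 + Ck)) * real nn powr e * sqrt (real nn) ^ (k - k)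
                 * unorm nn U (k - k) T * (\<Prod>t<k. vnorm2 nn (s t))"
proof -
  obtain k1 where k1: "k = Suc k1" using k3 by (cases k) auto
  define T' where "T' = (\<lambda>\<beta>. s k1 (\<beta>!0) * T [])"
  let ?P = "real nn powr e" and ?vs = "vnorm2 nn (s k1)" and ?Pi = "\<Prod>t<k1. vnorm2 nn (s t)"
  have eq: "tpair nn k \<kappa> (tprod k s T) = tpair nn k \<kappa> (tprod k1 s T')"
    unfolding tpair_def
  proof (rule sum.cong[OF refl])
    fix \<alpha> assume "\<alpha> \<in> idx nn k"
    hence len: "length \<alpha> = Suc k1" unfolding idx_def k1 by simp
    show "\<kappa> \<alpha> * tprod k s T \<alpha> = \<kappa> \<alpha> * tprod k1 s T' \<alpha>"
      unfolding tprod_def T'_def k1 using len by (simp add: nth_drop ac_simps)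
  qed
  have u1: "unorm nn U 1 T' \<le> Ck * ?vs * \<bar>T []\<bar>"
  proof (rule unorm_least[OF Une])
    fix x :: "nat \<Rightarrow> nat \<Rightarrow> real" assume x: "\<forall>j<1. x j \<in> U"
    have "tpair nn 1 (vprod 1 x) T' = (\<Sum>a<nn. x 0 a * s k1 a) * T []"
      unfolding tpair_def One_nat_def idx_Suc_sum idx_0 vprod_def T'_def
      by (simp add: sum_distrib_right sum_distrib_left ac_simps)
    hence "\<bar>tpair nn 1 (vprod 1 x) T'\<bar> = \<bar>\<Sum>a<nn. x 0 a * s k1 a\<bar> * \<bar>T []\<bar>" by (simp add: abs_mult)
    also have "\<dots> \<le> (vnorm2 nn (x 0) * ?vs) * \<bar>T []\<bar>" by (rule mult_right_mono[OF cs_real]) simp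
    also have "\<dots> \<le> (Ck * ?vs) * \<bar>T []\<bar>"
      using x CkU by (intro mult_right_mono) (auto simp: vnorm2_nonneg)
    finally show "norm (tpair nn 1 (vprod 1 (\<lambda>j l. of_real (x j l))) T') \<le> Ck * ?vs * \<bar>T []\<bar>" by simp
  qed
  have Q: "0 \<le> ?P * ?Pi" by (simp add: prod_nonneg vnorm2_nonneg)
  have "k1 \<in> {1..k-1}" using k3 k1 by auto
  hence "\<bar>tpair nn k \<kappa> (tprod k1 s T')\<bar> \<le> D * ?P * sqrt (real nn) ^ (k - k1 - 1)
                 * unorm nn U (k - k1) T' * ?Pi" using H by blast
  also have "\<dots> = D * unorm nn U 1 T' * (?P * ?Pi)" using k1 by (simp add: ac_simps)
  also have "\<dots> \<le> \<bar>D\<bar> * (Ck * ?vs * \<bar>T []\<bar>) * (?P * ?Pi)"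
    by (rule scale_le[OF Q unorm_nonneg[OF finU Une] u1]) simp
  also have "\<dots> = (\<bar>D\<bar> * Ck) * 1 * (?vs * \<bar>T []\<bar> * (?P * ?Pi))" by (simp add: ac_simps)
  also have "\<dots> \<le> (\<bar>D\<bar> * (1 + Ck)) * 1 * (?vs * \<bar>T []\<bar> * (?P * ?Pi))"
    by (rule scale_le) (use Ck in \<open>auto simp: Q vnorm2_nonneg abs_mult mult_left_mono\<close>)
  also have "\<dots> = (\<bar>D\<bar> * (1 + Ck)) * real nn powr e * sqrt (real nn) ^ (k - k)
                 * unorm nn U (k - k) T * (\<Prod>t<k. vnorm2 nn (s t))"
    using unorm0[OF finU Une, of nn T] unfolding k1 by (simp add: ac_simps)
  finally show ?thesis unfolding eq .
qed

lemma real_bound: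
  assumes "m \<le> k"
  shows "\<bar>tpair nn k \<kappa> (tprod m s T)\<bar> \<le> (\<bar>D\<bar> * (1 + Ck)) * real nn powr e * sqrt (real nn) ^ (k - m)
                 * unorm nn U (k - m) T * (\<Prod>t<m. vnorm2 nn (s t))"
proof -
  consider "m = 0" | "m = k" | "1 \<le> m \<and> m \<le> k - 1" using assms by linarith
  thus ?thesis
  proof cases
    case 1 thus ?thesis using real_m0 by simp
  next
    case 2 thus ?thesis using real_mk by simp
  next
    case 3 thus ?thesis using real_mid by blast
  qed
qed


lemma complex_bound:
  fixes s :: "nat \<Rightarrow> nat \<Rightarrow> complex" and T :: "nat list \<Rightarrow> complex"
  assumes m: "m \<le> k"
  shows "cmod (tpair nn k (\<lambda>\<alpha>. complex_of_real (\<kappa> \<alpha>)) (tprod m s T))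
     \<le> 2 ^ (m + 1) * (\<bar>D\<bar> * (1 + Ck)) * real nn powr e * sqrt (real nn) ^ (k - m)
                 * unorm nn U (k - m) T * (\<Prod>t<m. vnorm2 nn (s t))"
proof -
  define A where "A = {..<m}"
  define sB where "sB B t l = (if t \<in> B then Re (s t l) else Im (s t l))" for B t l
  define TR where "TR \<alpha> = Re (T \<alpha>)" for \<alpha>
  define TI where "TI \<alpha> = Im (T \<alpha>)" for \<alpha>
  define Dp where "Dp = \<bar>D\<bar> * (1 + Ck)"
  define X where "X = real nn powr e * sqrt (real nn) ^ (k - m) * unorm nn U (k - m) T * (\<Prod>t<m. vnorm2 nn (s t))"
  have finA: "finite A" unfolding A_def by simp
  have pa: "tprod m s T \<alpha> = (\<Sum>B\<in>Pow A. \<i> ^ card (A - B) *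
     (of_real (tprod m (sB B) TR \<alpha>) + \<i> * of_real (tprod m (sB B) TI \<alpha>)))" for \<alpha>
  proof -
    have "(\<Prod>t<m. s t (\<alpha> ! t)) = (\<Prod>t\<in>A. of_real (Re (s t (\<alpha> ! t))) + \<i> * of_real (Im (s t (\<alpha> ! t))))"
      unfolding A_def by (rule prod.cong[OF refl]) (rule complex_eq)
    also have "\<dots> = (\<Sum>B\<in>Pow A. (\<Prod>t\<in>B. of_real (Re (s t (\<alpha> ! t)))) * (\<Prod>t\<in>A-B. \<i> * of_real (Im (s t (\<alpha> ! t)))))"
      by (rule prod_add[OF finA])
    also have "\<dots> = (\<Sum>B\<in>Pow A. \<i> ^ card (A - B) * of_real (\<Prod>t\<in>A. sB B t (\<alpha> ! t)))"
      unfolding sB_def by (rule sum.cong[OF refl]) (rule prod_split[OF finA], auto)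
    finally have p: "(\<Prod>t<m. s t (\<alpha> ! t)) = (\<Sum>B\<in>Pow A. \<i> ^ card (A - B) * of_real (\<Prod>t\<in>A. sB B t (\<alpha> ! t)))" .
    have tt: "T (drop m \<alpha>) = of_real (TR (drop m \<alpha>)) + \<i> * of_real (TI (drop m \<alpha>))"
      unfolding TR_def TI_def by (rule complex_eq)
    show ?thesis unfolding tprod_def p tt A_def
      by (simp add: sum_distrib_right sum_distrib_left sum.distrib algebra_simps)
  qed
  have eq: "tpair nn k (\<lambda>\<alpha>. complex_of_real (\<kappa> \<alpha>)) (tprod m s T) = (\<Sum>B\<in>Pow A. \<i> ^ card (A - B) *
     (of_real (tpair nn k \<kappa> (tprod m (sB B) TR)) + \<i> * of_real (tpair nn k \<kappa> (tprod m (sB B) TI))))"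
    unfolding tpair_def pa
    by (simp add: sum_distrib_left sum_distrib_right sum.distrib algebra_simps sum.swap[of _ "Pow A"])
  have Dp0: "0 \<le> Dp" unfolding Dp_def using Ck by simp
  have bnd: "\<bar>tpair nn k \<kappa> (tprod m (sB B) TT)\<bar> \<le> Dp * X" if TT: "TT = TR \<or> TT = TI" for B TT
  proof -
    let ?c = "Dp * real nn powr e * sqrt (real nn) ^ (k - m)"
    have c0: "0 \<le> ?c" using Dp0 by simp
    have u: "unorm nn U (k - m) TT \<le> unorm nn U (k - m) T"
      using TT unorm_Re[OF finU Une] unorm_Im[OF finU Une] unfolding TR_def TI_def by auto
    have p: "(\<Prod>t<m. vnorm2 nn (sB B t)) \<le> (\<Prod>t<m. vnorm2 nn (s t))"
      by (rule prod_mono) (auto intro: vnorm2_nonneg vnorm2_le simp: sB_def abs_Re_le_cmod abs_Im_le_cmod)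
    have "\<bar>tpair nn k \<kappa> (tprod m (sB B) TT)\<bar> \<le> ?c * unorm nn U (k - m) TT * (\<Prod>t<m. vnorm2 nn (sB B t))"
      using real_bound[OF m, of "sB B" TT] unfolding Dp_def by simp
    also have "\<dots> \<le> ?c * unorm nn U (k - m) T * (\<Prod>t<m. vnorm2 nn (s t))"
    proof (rule mult_mono)
      show "?c * unorm nn U (k - m) TT \<le> ?c * unorm nn U (k - m) T" by (rule mult_left_mono[OF u c0])
      show "0 \<le> ?c * unorm nn U (k - m) T" using c0 unorm_nonneg[OF finU Une, of nn "k-m" T] by simp
      show "0 \<le> (\<Prod>t<m. vnorm2 nn (sB B t))" by (simp add: prod_nonneg vnorm2_nonneg)
    qed (rule p)
    also have "\<dots> = Dp * X" unfolding X_def by (simp add: ac_simps)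
    finally show ?thesis .
  qed
  have "cmod (tpair nn k (\<lambda>\<alpha>. complex_of_real (\<kappa> \<alpha>)) (tprod m s T))
      \<le> (\<Sum>B\<in>Pow A. cmod (\<i> ^ card (A - B) *
     (of_real (tpair nn k \<kappa> (tprod m (sB B) TR)) + \<i> * of_real (tpair nn k \<kappa> (tprod m (sB B) TI)))))"
    unfolding eq by (rule norm_sum)
  also have "\<dots> \<le> (\<Sum>B\<in>Pow A. 2 * (Dp * X))"
  proof (rule sum_mono)
    fix B
    have "cmod (\<i> ^ card (A - B) *
     (of_real (tpair nn k \<kappa> (tprod m (sB B) TR)) + \<i> * of_real (tpair nn k \<kappa> (tprod m (sB B) TI))))
      = cmod (of_real (tpair nn k \<kappa> (tprod m (sB B) TR)) + \<i> * of_real (tpair nn k \<kappa> (tprod m (sB B) TI)))"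
      by (simp add: norm_mult norm_power)
    also have "\<dots> \<le> cmod (of_real (tpair nn k \<kappa> (tprod m (sB B) TR))) + cmod (\<i> * of_real (tpair nn k \<kappa> (tprod m (sB B) TI)))"
      by (rule norm_triangle_ineq)
    also have "\<dots> = \<bar>tpair nn k \<kappa> (tprod m (sB B) TR)\<bar> + \<bar>tpair nn k \<kappa> (tprod m (sB B) TI)\<bar>"
      by (simp add: norm_mult)
    also have "\<dots> \<le> 2 * (Dp * X)" using bnd[of TR B] bnd[of TI B] by simp
    finally show "cmod (\<i> ^ card (A - B) *
     (of_real (tpair nn k \<kappa> (tprod m (sB B) TR)) + \<i> * of_real (tpair nn k \<kappa> (tprod m (sB B) TI))))
      \<le> 2 * (Dp * X)" .
  qed
  also have "\<dots> = 2 ^ (m + 1) * Dp * X"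
    using finA by (simp add: card_Pow A_def)
  finally show ?thesis unfolding X_def Dp_def by (simp add: ac_simps)
qed

end


lemma idx_empty: "0 < k \<Longrightarrow> idx 0 k = {}"
  unfolding idx_def by auto

theorem lemma3p14:
  fixes M :: "nat \<Rightarrow> 'w measure" and n :: "nat \<Rightarrow> nat"
    and g :: "nat \<Rightarrow> nat \<Rightarrow> 'w \<Rightarrow> nat \<Rightarrow> real"
    and k :: nat and Ck :: real and U :: "nat \<Rightarrow> (nat \<Rightarrow> real) set"
  assumes setting: "random_vectors_setting M n g"
    and C: "assumption_C M n g"
    and k: "k \<ge> 3"
    and Uk: "C_witness M n g k Ck U"
  shows "\<forall>\<epsilon>>0. \<exists>C>0. \<forall>N. \<forall>i\<in>{1..N}. \<forall>m\<le>k.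
           \<forall>(s::nat \<Rightarrow> nat \<Rightarrow> complex) (T::nat list \<Rightarrow> complex).
             cmod (tpair (n N) k (\<lambda>\<alpha>. complex_of_real (cumulant_tensor (M N) k (g N i) \<alpha>)) (tprod m s T))
               \<le> C * real (n N) powr \<epsilon> * sqrt (real (n N)) ^ (k - m)
                  * unorm (n N) (U N) (k - m) T * (\<Prod>t<m. vnorm2 (n N) (s t))"
proof (intro allI impI)
  fix \<epsilon> :: real assume \<epsilon>: "\<epsilon> > 0"
  note Uk' = Uk[unfolded C_witness_def]
  have Ck: "Ck > 0" by (rule conjunct1[OF Uk'])
  have UN: "\<forall>N. finite (U N) \<and> U N \<subseteq> {x. \<forall>l\<ge>n N. x l = 0} \<and>
          evec ` {..<n N} \<subseteq> U N \<and>
          real (card (U N)) \<le> real (n N) powr Ck \<and>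
          (\<forall>x\<in>U N. vnorm2 (n N) x \<le> Ck)"
    by (rule conjunct1[OF conjunct2[OF Uk']])
  have all: "\<forall>\<epsilon>>0. \<exists>C. \<forall>N. \<forall>i\<in>{1..N}. \<forall>m\<in>{1..k-1}.
        \<forall>(s::nat \<Rightarrow> nat \<Rightarrow> real) (T::nat list \<Rightarrow> real).
          \<bar>tpair (n N) k (cumulant_tensor (M N) k (g N i)) (tprod m s T)\<bar>
            \<le> C * real (n N) powr \<epsilon> * sqrt (real (n N)) ^ (k - m - 1)
                * unorm (n N) (U N) (k - m) T * (\<Prod>t<m. vnorm2 (n N) (s t))"
    by (rule conjunct2[OF conjunct2[OF Uk']])
  obtain D where D: "\<forall>N. \<forall>i\<in>{1..N}. \<forall>m\<in>{1..k-1}.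
        \<forall>(s::nat \<Rightarrow> nat \<Rightarrow> real) (T::nat list \<Rightarrow> real).
          \<bar>tpair (n N) k (cumulant_tensor (M N) k (g N i)) (tprod m s T)\<bar>
            \<le> D * real (n N) powr \<epsilon> * sqrt (real (n N)) ^ (k - m - 1)
                * unorm (n N) (U N) (k - m) T * (\<Prod>t<m. vnorm2 (n N) (s t))"
    using all[rule_format, OF \<epsilon>] by (elim exE)
  define Dp where "Dp = \<bar>D\<bar> * (1 + Ck)"
  have Dp0: "0 \<le> Dp" unfolding Dp_def using Ck by simp
  define C where "C = 2 ^ (k + 1) * Dp + 1"
  show "\<exists>C>0. \<forall>N. \<forall>i\<in>{1..N}. \<forall>m\<le>k.
           \<forall>(s::nat \<Rightarrow> nat \<Rightarrow> complex) (T::nat list \<Rightarrow> complex).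
             cmod (tpair (n N) k (\<lambda>\<alpha>. complex_of_real (cumulant_tensor (M N) k (g N i) \<alpha>)) (tprod m s T))
               \<le> C * real (n N) powr \<epsilon> * sqrt (real (n N)) ^ (k - m)
                  * unorm (n N) (U N) (k - m) T * (\<Prod>t<m. vnorm2 (n N) (s t))"
  proof (intro exI[of _ C] conjI allI ballI impI)
    show "C > 0" unfolding C_def using Dp0 by (simp add: add_nonneg_pos)
    fix N i m :: nat and s :: "nat \<Rightarrow> nat \<Rightarrow> complex" and T :: "nat list \<Rightarrow> complex"
    assume i: "i \<in> {1..N}" and m: "m \<le> k"
    show "cmod (tpair (n N) k (\<lambda>\<alpha>. complex_of_real (cumulant_tensor (M N) k (g N i) \<alpha>)) (tprod m s T))
               \<le> C * real (n N) powr \<epsilon> * sqrt (real (n N)) ^ (k - m)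
                  * unorm (n N) (U N) (k - m) T * (\<Prod>t<m. vnorm2 (n N) (s t))"
    proof (cases "n N = 0")
      case True
      have "idx (n N) k = {}" using True k by (simp add: idx_empty)
      thus ?thesis using True by (simp add: tpair_def)
    next
      case False
      hence nn: "n N \<ge> 1" by simp
      let ?X = "real (n N) powr \<epsilon> * sqrt (real (n N)) ^ (k - m)
                  * unorm (n N) (U N) (k - m) T * (\<Prod>t<m. vnorm2 (n N) (s t))"
      have finU: "finite (U N)" and evU: "evec ` {..<n N} \<subseteq> U N" and CkU: "\<forall>x\<in>U N. vnorm2 (n N) x \<le> Ck"
        using UN by blast+
      have H: "\<forall>m\<in>{1..k-1}. \<forall>(s::nat\<Rightarrow>nat\<Rightarrow>real) (T::nat list \<Rightarrow> real).
              \<bar>tpair (n N) k (cumulant_tensor (M N) k (g N i)) (tprod m s T)\<bar> \<le> D * real (n N) powr \<epsilon> * sqrt (real (n N)) ^ (k - m - 1)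
                 * unorm (n N) (U N) (k - m) T * (\<Prod>t<m. vnorm2 (n N) (s t))"
        by (rule bspec[OF spec[OF D, of N] i])
      have Une: "U N \<noteq> {}" by (rule Une[OF nn k finU evU CkU Ck H])
      have X0: "0 \<le> ?X" using unorm_nonneg[OF finU Une, of "n N" "k - m" T]
        by (intro mult_nonneg_nonneg prod_nonneg) (auto simp: vnorm2_nonneg)
      have "cmod (tpair (n N) k (\<lambda>\<alpha>. complex_of_real (cumulant_tensor (M N) k (g N i) \<alpha>)) (tprod m s T))
          \<le> 2 ^ (m + 1) * Dp * ?X"
        using complex_bound[OF nn k finU evU CkU Ck H m, of s T] unfolding Dp_def by (simp add: ac_simps)
      also have "\<dots> \<le> C * ?X"
      proof (rule mult_right_mono[OF _ X0])
        have "(2::real) ^ (m + 1) \<le> 2 ^ (k + 1)" by (rule power_increasing) (use m in auto)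
        hence "2 ^ (m + 1) * Dp \<le> 2 ^ (k + 1) * Dp" by (rule mult_right_mono[OF _ Dp0])
        thus "2 ^ (m + 1) * Dp \<le> C" unfolding C_def by simp
      qed
      finally show ?thesis by (simp add: ac_simps)
    qed
  qed
qed

end
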